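(* (a) If $S$ is an $\varepsilon$-synchronization string, then every consecutive substring of $S$ satisfies the $\varepsilon$-self-matching property. (b) If every consecutive substring of a string $S$ satisfies the $\frac{\varepsilon}{2}$-self-matching property, then $S$ is an $\varepsilon$-synchronization string.
   Context: $\mathrm{ED}$ is insertion/deletion edit distance; $S[i,j)$ is the substring at positions $i..j-1$. $S\in\Sigma^n$ is an $\varepsilon$-synchronization string if $\mathrm{ED}(S[i,j),S[j,k))>(1-\varepsilon)(k-i)$ for all $1\le i<j<k\le n+1$. A monotone matching between $S$ and $S'$ is a set of pairs $\{(a_1,b_1),\dots,(a_m,b_m)\}$ with $a_1<\dots<a_m$, $b_1<\dots<b_m$, $S[a_i]=S'[b_i]$. In a monotone matching from $S$ to itself a pair is good if $a_i=b_i$ and bad otherwise. A string $S$ satisfies the $\varepsilon$-self-matching property if every monotone matching between $S$ and itself contains fewer than $\varepsilon|S|$ bad pairs. *)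

theory Defs
  imports Complex_Main
begin

text \<open>Strings are lists; positions are 0-indexed, so the paper's S[i,j) with
  1 \<le> i \<le> j \<le> n+1 becomes substr S (i-1) (j-1).\<close>

definition substr :: "'a list \<Rightarrow> nat \<Rightarrow> nat \<Rightarrow> 'a list" where
  "substr S i j = take (j - i) (drop i S)"

definition indel_step :: "'a list \<Rightarrow> 'a list \<Rightarrow> bool" where
  "indel_step x y \<longleftrightarrow>
     (\<exists>u v c. x = u @ v \<and> y = u @ c # v) \<or> (\<exists>u v c. x = u @ c # v \<and> y = u @ v)"

definition ED :: "'a list \<Rightarrow> 'a list \<Rightarrow> nat" where
  "ED x y = (LEAST n. (indel_step ^^ n) x y)"

definition sync_string :: "real \<Rightarrow> 'a list \<Rightarrow> bool" where
  "sync_string \<epsilon> S \<longleftrightarrow>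
     (\<forall>i j k. i < j \<and> j < k \<and> k \<le> length S \<longrightarrow>
        real (ED (substr S i j) (substr S j k)) > (1 - \<epsilon>) * real (k - i))"

definition monotone_matching :: "'a list \<Rightarrow> 'a list \<Rightarrow> (nat \<times> nat) set \<Rightarrow> bool" where
  "monotone_matching S S' M \<longleftrightarrow>
     (\<forall>(a, b) \<in> M. a < length S \<and> b < length S' \<and> S ! a = S' ! b) \<and>
     (\<forall>(a, b) \<in> M. \<forall>(a', b') \<in> M. (a < a' \<longrightarrow> b < b') \<and> (a = a' \<longrightarrow> b = b'))"

definition bad_pairs :: "(nat \<times> nat) set \<Rightarrow> (nat \<times> nat) set" where
  "bad_pairs M = {p \<in> M. fst p \<noteq> snd p}"

definition self_matching_property :: "real \<Rightarrow> 'a list \<Rightarrow> bool" where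
  "self_matching_property \<epsilon> S \<longleftrightarrow>
     (\<forall>M. monotone_matching S S M \<longrightarrow> real (card (bad_pairs M)) < \<epsilon> * real (length S))"

end

theory Submission
  imports Defs "HOL-Library.Sublist"
begin

lemma indel_sym: "indel_step x y \<Longrightarrow> indel_step y x"
  unfolding indel_step_def by blast

lemma relpow_sym: "(indel_step ^^ n) x y \<Longrightarrow> (indel_step ^^ n) y x"
proof (induction n arbitrary: y)
  case 0 then show ?case by simp
next
  case (Suc n)
  from Suc.prems obtain w where "(indel_step ^^ n) x w" "indel_step w y" by (rule relpowp_Suc_E)
  then show ?case using Suc.IH indel_sym relpowp_Suc_I2 by metis
qed

lemma indel_Cons: "indel_step x y \<Longrightarrow> indel_step (c#x) (c#y)"
  unfolding indel_step_def by (metis append_Cons)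

lemma relpow_Cons: "(indel_step ^^ n) x y \<Longrightarrow> (indel_step ^^ n) (c#x) (c#y)"
proof (induction n arbitrary: y)
  case 0 then show ?case by simp
next
  case (Suc n)
  from Suc.prems obtain w where "(indel_step ^^ n) x w" "indel_step w y" by (rule relpowp_Suc_E)
  then show ?case using Suc.IH indel_Cons relpowp_Suc_I by metis
qed

lemma del_head: "indel_step (c#x) x"
  unfolding indel_step_def by (metis append_Nil)

lemma subseq_del: "subseq z x \<Longrightarrow> (indel_step ^^ (length x - length z)) x z"
proof (induction z x rule: list_emb.induct)
  case (list_emb_Nil ys)
  then show ?case
  proof (induction ys)
    case Nil then show ?case by simp
  next
    case (Cons a ys) then show ?case using del_head relpowp_Suc_I2 by fastforce
  qed
next
  case (list_emb_Cons xs ys y)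
  have "length xs \<le> length ys" using list_emb_Cons.hyps list_emb_length by blast
  then have "length (y#ys) - length xs = Suc (length ys - length xs)" by simp
  then show ?case using list_emb_Cons.IH del_head relpowp_Suc_I2 by metis
next
  case (list_emb_Cons2 x y xs ys)
  then show ?case using relpow_Cons by fastforce
qed

lemma ED_upper:
  assumes "subseq z x" "subseq z y"
  shows "ED x y \<le> length x + length y - 2 * length z"
proof -
  have l: "length z \<le> length x" "length z \<le> length y" using assms list_emb_length by blast+
  have "(indel_step ^^ (length x - length z)) x z" using subseq_del assms(1) by blast
  moreover have "(indel_step ^^ (length y - length z)) z y" using subseq_del assms(2) relpow_sym by blast
  ultimately have "(indel_step ^^ ((length x - length z) + (length y - length z))) x y"
    by (auto simp: relpowp_add)
  then have "ED x y \<le> (length x - length z) + (length y - length z)"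
    unfolding ED_def by (rule Least_le)
  then show ?thesis using l by linarith
qed

lemma ED_attained: "(indel_step ^^ (ED x y)) x y"
proof -
  have "(indel_step ^^ ((length x - 0) + (length y - 0))) x y"
    using subseq_del[of "[]" x] subseq_del[of "[]" y] relpow_sym by (auto simp: relpowp_add)
  then show ?thesis unfolding ED_def by (rule LeastI)
qed

lemma subseq_remove: "subseq z (u @ c # v) \<Longrightarrow> \<exists>z'. subseq z' z \<and> subseq z' (u @ v) \<and> length z \<le> Suc (length z')"
proof -
  assume "subseq z (u @ c # v)"
  then obtain z1 z2 where z: "z = z1 @ z2" "subseq z1 u" "subseq z2 (c # v)" by (rule subseq_appendE)
  have "subseq (tl z2) v" using z(3) by (cases z2) (auto split: if_splits dest: subseq_Cons')
  moreover have "subseq (tl z2) z2" by (cases z2) auto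
  ultimately show ?thesis using z by (intro exI[of _ "z1 @ tl z2"]) (auto intro: list_emb_append_mono)
qed

lemma subseq_ins: "subseq (u @ v) (u @ c # v)"
  by (induction u) (auto intro: list_emb_Cons list_emb_refl)

lemma relpow_lower: "(indel_step ^^ n) x y \<Longrightarrow> \<exists>z. subseq z x \<and> subseq z y \<and> length x + length y \<le> 2 * length z + n"
proof (induction n arbitrary: y)
  case 0 then show ?case by (auto intro!: exI[of _ x])
next
  case (Suc n)
  from Suc.prems obtain w where w: "(indel_step ^^ n) x w" "indel_step w y" by (rule relpowp_Suc_E)
  from Suc.IH[OF w(1)] obtain z where z: "subseq z x" "subseq z w" "length x + length w \<le> 2 * length z + n" by blast
  from w(2) show ?case unfolding indel_step_def
  proof (elim disjE exE conjE)
    fix u v c assume "w = u @ v" "y = u @ c # v"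
    then have "subseq w y" using subseq_ins by simp
    moreover have "length y = Suc (length w)" using \<open>w = u @ v\<close> \<open>y = u @ c # v\<close> by simp
    ultimately show ?thesis using z subseq_order.order_trans[of z w y] by (intro exI[of _ z]) simp
  next
    fix u v c assume "w = u @ c # v" "y = u @ v"
    have "subseq z (u @ c # v)" using z(2) \<open>w = u @ c # v\<close> by simp
    from subseq_remove[OF this] obtain z' where "subseq z' z" "subseq z' (u @ v)" "length z \<le> Suc (length z')" by (elim exE conjE)
    then have "subseq z' z" "subseq z' y" "length z \<le> Suc (length z')" using \<open>y = u @ v\<close> by simp_all
    moreover have "Suc (length y) = length w" using \<open>w = u @ c # v\<close> \<open>y = u @ v\<close> by simp
    ultimately show ?thesis using z subseq_order.order_trans[of z' z x] by (intro exI[of _ z']) simp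
  qed
qed

lemma ED_lower: "\<exists>z. subseq z x \<and> subseq z y \<and> length x + length y \<le> 2 * length z + ED x y"
  using relpow_lower[OF ED_attained] .

lemma subseq_idx: "subseq z x \<Longrightarrow> \<exists>f. (\<forall>i j. i < j \<longrightarrow> j < length z \<longrightarrow> f i < f j) \<and>
   (\<forall>i < length z. f i < length x \<and> x ! (f i) = z ! i)"
proof (induction z x rule: list_emb.induct)
  case (list_emb_Nil ys) then show ?case by auto
next
  case (list_emb_Cons xs ys y)
  then obtain f where f: "\<forall>i j. i < j \<longrightarrow> j < length xs \<longrightarrow> f i < f j"
     "\<forall>i < length xs. f i < length ys \<and> ys ! (f i) = xs ! i" by blast
  show ?case using f by (intro exI[of _ "\<lambda>i. Suc (f i)"]) auto
next
  case (list_emb_Cons2 x y xs ys)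
  then obtain f where f: "\<forall>i j. i < j \<longrightarrow> j < length xs \<longrightarrow> f i < f j"
     "\<forall>i < length xs. f i < length ys \<and> ys ! (f i) = xs ! i" by blast
  define g where "g = (\<lambda>i. if i = 0 then 0 else Suc (f (i - 1)))"
  have "\<forall>i j. i < j \<longrightarrow> j < length (x#xs) \<longrightarrow> g i < g j"
  proof (intro allI impI)
    fix i j assume "i < j" "j < length (x#xs)"
    then show "g i < g j" using f(1)[rule_format, of "i-1" "j-1"] unfolding g_def by auto
  qed
  moreover have "\<forall>i < length (x#xs). g i < length (y#ys) \<and> (y#ys) ! (g i) = (x#xs) ! i"
  proof (intro allI impI)
    fix i assume "i < length (x#xs)"
    then show "g i < length (y#ys) \<and> (y#ys) ! (g i) = (x#xs) ! i"
      using f(2)[rule_format, of "i-1"] list_emb_Cons2.hyps(1) unfolding g_def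
      by (cases i) auto
  qed
  ultimately show ?case by blast
qed

lemma matching_subseq:
  "finite G \<Longrightarrow> (\<forall>(a,b)\<in>G. p \<le> a \<and> a - p < length x \<and> q \<le> b \<and> b - q < length y \<and> x!(a-p) = y!(b-q))
   \<Longrightarrow> (\<forall>(a,b)\<in>G. \<forall>(a',b')\<in>G. (a < a' \<longrightarrow> b < b') \<and> (a = a' \<longrightarrow> b = b'))
   \<Longrightarrow> \<exists>z. subseq z x \<and> subseq z y \<and> length z = card G"
proof (induction "card G" arbitrary: G x y rule: less_induct)
  case less
  show ?case
  proof (cases "G = {}")
    case True then show ?thesis by (intro exI[of _ "[]"]) auto
  next
    case False
    define a where "a = Max (fst ` G)"
    have "a \<in> fst ` G" unfolding a_def using False less.prems(1) by auto
    then obtain b where ab: "(a,b) \<in> G" by force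
    have amax: "\<forall>(a',b')\<in>G. a' \<le> a"
    proof (clarify)
      fix a' b' assume "(a',b') \<in> G"
      then have "a' \<in> fst ` G" by (metis fst_conv image_eqI)
      then show "a' \<le> a" unfolding a_def using less.prems(1) by simp
    qed
    have m1: "\<And>a b a' b'. (a,b)\<in>G \<Longrightarrow> (a',b')\<in>G \<Longrightarrow> a<a' \<Longrightarrow> b<b'"
      using less.prems(3) by fast
    have m2: "\<And>a b a' b'. (a,b)\<in>G \<Longrightarrow> (a',b')\<in>G \<Longrightarrow> a=a' \<Longrightarrow> b=b'"
      using less.prems(3) by fast
    define G' where "G' = G - {(a,b)}"
    have lt: "\<forall>(a',b')\<in>G'. a' < a \<and> b' < b"
    proof (intro ballI, clarify)
      fix a' b' assume "(a',b') \<in> G'"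
      then have i: "(a',b') \<in> G" "(a',b') \<noteq> (a,b)" unfolding G'_def by auto
      have "a' \<le> a" using amax i(1) by auto
      moreover have "a' \<noteq> a" using m2[OF i(1) ab] i(2) by auto
      ultimately have "a' < a" by simp
      then show "a' < a \<and> b' < b" using m1[OF i(1) ab] by simp
    qed
    have cG: "card G' < card G" unfolding G'_def using ab less.prems(1) by (metis card_Diff1_less)
    have pa: "p \<le> a" "a - p < length x" "q \<le> b" "b - q < length y" "x!(a-p) = y!(b-q)"
      using less.prems(2) ab by auto
    have h2: "\<forall>(a',b')\<in>G'. p \<le> a' \<and> a' - p < length (take (a-p) x) \<and> q \<le> b' \<and> b' - q < length (take (b-q) y)
         \<and> take (a-p) x ! (a'-p) = take (b-q) y ! (b'-q)"
    proof (clarify)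
      fix a' b' assume i: "(a',b') \<in> G'"
      then have "(a',b') \<in> G" unfolding G'_def by auto
      then have h: "p \<le> a'" "a' - p < length x" "q \<le> b'" "b' - q < length y" "x!(a'-p) = y!(b'-q)"
        using less.prems(2) by auto
      have "a' < a" "b' < b" using lt i by auto
      then show "p \<le> a' \<and> a' - p < length (take (a-p) x) \<and> q \<le> b' \<and> b' - q < length (take (b-q) y)
         \<and> take (a-p) x ! (a'-p) = take (b-q) y ! (b'-q)" using h pa by auto
    qed
    have h3: "\<forall>(a,b)\<in>G'. \<forall>(a',b')\<in>G'. (a < a' \<longrightarrow> b < b') \<and> (a = a' \<longrightarrow> b = b')"
      using less.prems(3) unfolding G'_def by auto
    obtain z where z: "subseq z (take (a-p) x)" "subseq z (take (b-q) y)" "length z = card G'"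
      using less.hyps[OF cG _ h2 h3] less.prems(1) unfolding G'_def by blast
    have tx: "take (Suc (a-p)) x = take (a-p) x @ [x!(a-p)]" using pa by (simp add: take_Suc_conv_app_nth)
    have ty: "take (Suc (b-q)) y = take (b-q) y @ [x!(a-p)]" using pa by (simp add: take_Suc_conv_app_nth)
    have "subseq (z @ [x!(a-p)]) (take (Suc (a-p)) x)" using tx z(1) by (simp add: list_emb_append_mono)
    then have "subseq (z @ [x!(a-p)]) (take (Suc (a-p)) x @ drop (Suc (a-p)) x)" by (rule subseq_rev_drop_many)
    then have s1: "subseq (z @ [x!(a-p)]) x" by simp
    have "subseq (z @ [x!(a-p)]) (take (Suc (b-q)) y)" using ty z(2) by (simp add: list_emb_append_mono)
    then have "subseq (z @ [x!(a-p)]) (take (Suc (b-q)) y @ drop (Suc (b-q)) y)" by (rule subseq_rev_drop_many)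
    then have s2: "subseq (z @ [x!(a-p)]) y" by simp
    have "card G = Suc (card G')" unfolding G'_def using ab less.prems(1)
      by (metis False card.remove card_Suc_Diff1)
    then show ?thesis using s1 s2 z(3) by (intro exI[of _ "z @ [x!(a-p)]"]) auto
  qed
qed

lemma substr_len: "j \<le> length S \<Longrightarrow> length (substr S i j) = j - i"
  unfolding substr_def by simp

lemma substr_nth: "i \<le> a \<Longrightarrow> a < j \<Longrightarrow> j \<le> length S \<Longrightarrow> substr S i j ! (a - i) = S ! a"
  unfolding substr_def by simp

lemma substr_substr:
  assumes "p \<le> q" "q \<le> j - i"
  shows "substr (substr S i j) p q = substr S (i+p) (i+q)"
proof -
  have "substr (substr S i j) p q = take (q-p) (drop p (take (j-i) (drop i S)))" unfolding substr_def ..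
  also have "\<dots> = take (q-p) (take (j-i-p) (drop p (drop i S)))" by (simp add: drop_take)
  also have "\<dots> = take (q-p) (drop p (drop i S))" using assms by (simp add: min_def)
  also have "\<dots> = take ((i+q) - (i+p)) (drop (i+p) S)" by (simp add: add.commute)
  finally show ?thesis unfolding substr_def .
qed

lemma substr_append:
  assumes "i \<le> j" "j \<le> k"
  shows "substr S i k = substr S i j @ substr S j k"
proof -
  have e: "k - i = (j-i) + (k-j)" using assms by simp
  have d: "drop (j-i) (drop i S) = drop j S" using assms by simp
  have "take (k-i) (drop i S) = take (j-i) (drop i S) @ take (k-j) (drop (j-i) (drop i S))"
    unfolding e by (rule take_add)
  then show ?thesis unfolding substr_def d .
qed

lemma crossing:
  assumes sync: "sync_string \<epsilon> T" and fin: "finite G" and ne: "G \<noteq> {}"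
    and pr: "\<forall>(a,b)\<in>G. p \<le> a \<and> a < q \<and> q \<le> b \<and> b < r \<and> T!a = T!b" and r: "r \<le> length T"
    and mono: "\<forall>(a,b)\<in>G. \<forall>(a',b')\<in>G. (a < a' \<longrightarrow> b < b') \<and> (a = a' \<longrightarrow> b = b')"
  shows "2 * real (card G) < \<epsilon> * real (r - p)"
proof -
  obtain a0 b0 where "(a0,b0) \<in> G" using ne by auto
  then have pqr: "p < q" "q < r" using pr by auto
  define x where "x = substr T p q"
  define y where "y = substr T q r"
  have lx: "length x = q - p" unfolding x_def using pqr r by (simp add: substr_len)
  have ly: "length y = r - q" unfolding y_def using pqr r by (simp add: substr_len)
  have h: "\<forall>(a,b)\<in>G. p \<le> a \<and> a - p < length x \<and> q \<le> b \<and> b - q < length y \<and> x!(a-p) = y!(b-q)"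
  proof (clarify)
    fix a b assume ab: "(a,b) \<in> G"
    then have c: "p \<le> a" "a < q" "q \<le> b" "b < r" "T!a = T!b" using pr by auto
    have "x!(a-p) = T!a" unfolding x_def using c pqr r by (intro substr_nth) auto
    moreover have "y!(b-q) = T!b" unfolding y_def using c pqr r by (intro substr_nth) auto
    ultimately show "p \<le> a \<and> a - p < length x \<and> q \<le> b \<and> b - q < length y \<and> x!(a-p) = y!(b-q)"
      using c lx ly by auto
  qed
  obtain z where z: "subseq z x" "subseq z y" "length z = card G"
    using matching_subseq[OF fin h mono] by blast
  have zl: "length z \<le> length x" using z(1) list_emb_length by blast
  have zl2: "length z \<le> length y" using z(2) list_emb_length by blast
  have ed: "ED x y \<le> length x + length y - 2 * length z" using ED_upper[OF z(1) z(2)] .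
  have "real (ED x y) > (1 - \<epsilon>) * real (r - p)"
    using sync pqr r unfolding sync_string_def x_def y_def by blast
  moreover have n: "ED x y + 2 * card G \<le> r - p"
    using ed zl zl2 z(3) lx ly pqr by linarith
  then have "real (ED x y + 2 * card G) \<le> real (r - p)" by (rule of_nat_mono)
  then have "real (ED x y) \<le> real (r - p) - 2 * real (card G)" by simp
  ultimately show ?thesis by (simp add: algebra_simps del: of_nat_diff)
qed

definition UU :: "(nat \<times> nat) set \<Rightarrow> nat set" where
  "UU F = {x. \<exists>(a,b)\<in>F. a \<le> x \<and> x \<le> b}"

lemma UU_intro: "(a,b) \<in> F \<Longrightarrow> a \<le> x \<Longrightarrow> x \<le> b \<Longrightarrow> x \<in> UU F"
  unfolding UU_def by blast

lemma UU_elim: "x \<in> UU F \<Longrightarrow> \<exists>a b. (a,b) \<in> F \<and> a \<le> x \<and> x \<le> b"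
  unfolding UU_def by blast

lemma UU_mono: "F' \<subseteq> F \<Longrightarrow> UU F' \<subseteq> UU F"
  unfolding UU_def by blast

lemma UU_bound: "\<forall>(a,b)\<in>F. b < n \<Longrightarrow> UU F \<subseteq> {..<n}"
  unfolding UU_def by fastforce

lemma forward:
  assumes sync: "sync_string \<epsilon> T" and eps: "0 < \<epsilon>"
  shows "finite F \<Longrightarrow> (\<forall>(a,b)\<in>F. a < b \<and> b < length T \<and> T!a = T!b)
    \<Longrightarrow> (\<forall>(a,b)\<in>F. \<forall>(a',b')\<in>F. (a < a' \<longrightarrow> b < b') \<and> (a = a' \<longrightarrow> b = b'))
    \<Longrightarrow> \<exists>P1 P2. P1 \<subseteq> UU F \<and> P2 \<subseteq> UU F \<and> (\<forall>x\<in>P2. \<exists>(a,b)\<in>F. b \<le> x)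
       \<and> 2 * real (card F) \<le> \<epsilon> * real (card P1 + card P2)
       \<and> (F \<noteq> {} \<longrightarrow> 2 * real (card F) < \<epsilon> * real (card P1 + card P2))"
proof (induction "card F" arbitrary: F rule: less_induct)
  case less
  note fin = less.prems(1) and pr = less.prems(2) and mono = less.prems(3)
  show ?case
  proof (cases "F = {}")
    case True then show ?thesis by (intro exI[of _ "{}"]) auto
  next
    case False
    have m1: "\<And>a b a' b'. (a,b)\<in>F \<Longrightarrow> (a',b')\<in>F \<Longrightarrow> a<a' \<Longrightarrow> b<b'"
      using mono by fast
    have m2: "\<And>a b a' b'. (a,b)\<in>F \<Longrightarrow> (a',b')\<in>F \<Longrightarrow> a=a' \<Longrightarrow> b=b'"
      using mono by fast
    have pr': "\<And>a b. (a,b)\<in>F \<Longrightarrow> a < b \<and> b < length T \<and> T!a = T!b" using pr by fast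
    define s0 where "s0 = Min (fst ` F)"
    have "s0 \<in> fst ` F" unfolding s0_def using False fin by simp
    then obtain j1 where sj: "(s0,j1) \<in> F" by force
    have smin: "\<And>a b. (a,b) \<in> F \<Longrightarrow> s0 \<le> a"
    proof -
      fix a b assume "(a,b) \<in> F"
      then have "a \<in> fst ` F" by (metis fst_conv image_eqI)
      then show "s0 \<le> a" unfolding s0_def using fin by simp
    qed
    have jmin: "\<And>a b. (a,b) \<in> F \<Longrightarrow> j1 \<le> b"
    proof -
      fix a b assume ab: "(a,b) \<in> F"
      show "j1 \<le> b"
      proof (cases "a = s0")
        case True then show ?thesis using m2[OF sj ab] by simp
      next
        case False then have "s0 < a" using smin[OF ab] by simp
        then show ?thesis using m1[OF sj ab] by simp
      qed
    qed
    have sj1: "s0 < j1" using pr' sj by blast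
    define G0 where "G0 = {(a,b). (a,b) \<in> F \<and> a < j1}"
    define F' where "F' = {(a,b). (a,b) \<in> F \<and> j1 \<le> a}"
    have G0F: "G0 \<subseteq> F" and F'F: "F' \<subseteq> F" unfolding G0_def F'_def by auto
    have finG0: "finite G0" and finF': "finite F'" using G0F F'F fin finite_subset by auto
    have sjG: "(s0,j1) \<in> G0" unfolding G0_def using sj sj1 by simp
    have FU: "F = G0 \<union> F'" unfolding G0_def F'_def by auto
    have Fdisj: "G0 \<inter> F' = {}" unfolding G0_def F'_def by auto
    define last0 where "last0 = Max (snd ` G0)"
    have "last0 \<in> snd ` G0" unfolding last0_def using sjG finG0 by (metis Max_in empty_iff finite_imageI image_is_empty)
    then obtain al where alG: "(al,last0) \<in> G0" by force
    have al: "al < j1" using alG unfolding G0_def by simp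
    have lmax: "\<And>a b. (a,b) \<in> G0 \<Longrightarrow> b \<le> last0"
    proof -
      fix a b assume "(a,b) \<in> G0"
      then have "b \<in> snd ` G0" by (metis snd_conv image_eqI)
      then show "b \<le> last0" unfolding last0_def using finG0 by simp
    qed
    have jl: "j1 \<le> last0" using lmax[OF sjG] .
    have lT: "last0 < length T" using pr' alG G0F by blast
    have cross: "2 * real (card G0) < \<epsilon> * real (Suc last0 - s0)"
    proof (rule crossing[OF sync finG0])
      show "G0 \<noteq> {}" using sjG by blast
      show "Suc last0 \<le> length T" using lT by simp
      show "\<forall>(a,b)\<in>G0. s0 \<le> a \<and> a < j1 \<and> j1 \<le> b \<and> b < Suc last0 \<and> T!a = T!b"
      proof (clarify)
        fix a b assume ab: "(a,b) \<in> G0"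
        then have abF: "(a,b) \<in> F" using G0F by blast
        show "s0 \<le> a \<and> a < j1 \<and> j1 \<le> b \<and> b < Suc last0 \<and> T!a = T!b"
          using smin[OF abF] jmin[OF abF] lmax[OF ab] pr'[OF abF] ab unfolding G0_def by auto
      qed
      show "\<forall>(a,b)\<in>G0. \<forall>(a',b')\<in>G0. (a < a' \<longrightarrow> b < b') \<and> (a = a' \<longrightarrow> b = b')"
        using mono G0F by blast
    qed
    have cF': "card F' < card F"
    proof (rule psubset_card_mono[OF fin])
      have "(s0,j1) \<notin> F'" unfolding F'_def using sj1 by simp
      then show "F' \<subset> F" using F'F sj by blast
    qed
    have pr2: "\<forall>(a,b)\<in>F'. a < b \<and> b < length T \<and> T!a = T!b"
    proof (clarify)
      fix a b assume "(a,b) \<in> F'"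
      then have "(a,b) \<in> F" using F'F by blast
      then show "a < b \<and> b < length T \<and> T!a = T!b" by (rule pr')
    qed
    have mono2: "\<forall>(a,b)\<in>F'. \<forall>(a',b')\<in>F'. (a < a' \<longrightarrow> b < b') \<and> (a = a' \<longrightarrow> b = b')"
    proof (clarify)
      fix a b a' b' assume "(a,b) \<in> F'" "(a',b') \<in> F'"
      then have "(a,b) \<in> F" "(a',b') \<in> F" using F'F by blast+
      then show "(a < a' \<longrightarrow> b < b') \<and> (a = a' \<longrightarrow> b = b')" using m1 m2 by blast
    qed
    obtain P1' P2' where P': "P1' \<subseteq> UU F'" "P2' \<subseteq> UU F'" "\<forall>x\<in>P2'. \<exists>(a,b)\<in>F'. b \<le> x"
       "2 * real (card F') \<le> \<epsilon> * real (card P1' + card P2')"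
       "F' \<noteq> {} \<longrightarrow> 2 * real (card F') < \<epsilon> * real (card P1' + card P2')"
      using less.hyps[OF cF' finF' pr2 mono2] by (elim exE conjE)
    have F'big: "\<And>a b. (a,b) \<in> F' \<Longrightarrow> j1 \<le> a \<and> last0 < b"
    proof -
      fix a b assume ab: "(a,b) \<in> F'"
      then have "j1 \<le> a" unfolding F'_def by simp
      moreover have "(a,b) \<in> F" using ab F'F by blast
      moreover have "(al,last0) \<in> F" using alG G0F by blast
      moreover have "al < a" using al calculation(1) by simp
      ultimately show "j1 \<le> a \<and> last0 < b" using m1[of al last0 a b] by blast
    qed
    have UF'ge: "\<And>x. x \<in> UU F' \<Longrightarrow> j1 \<le> x"
    proof -
      fix x assume "x \<in> UU F'"
      then obtain a b where "(a,b) \<in> F'" "a \<le> x" using UU_elim by blast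
      then show "j1 \<le> x" using F'big by fastforce
    qed
    have P2'ge: "\<And>x. x \<in> P2' \<Longrightarrow> last0 < x"
    proof -
      fix x assume "x \<in> P2'"
      then obtain a b where "(a,b) \<in> F'" "b \<le> x" using P'(3) by blast
      then show "last0 < x" using F'big by fastforce
    qed
    have "\<forall>(a,b)\<in>F. b < length T" using pr' by blast
    then have "UU F \<subseteq> {..<length T}" by (rule UU_bound)
    then have finU: "finite (UU F)" by (rule finite_subset) simp
    have "P1' \<subseteq> UU F" using P'(1) UU_mono[OF F'F] by (rule subset_trans)
    then have finP1': "finite P1'" using finU by (rule finite_subset)
    have "P2' \<subseteq> UU F" using P'(2) UU_mono[OF F'F] by (rule subset_trans)
    then have finP2': "finite P2'" using finU by (rule finite_subset)
    define P1 where "P1 = {s0..<j1} \<union> P1'"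
    define P2 where "P2 = {j1..last0} \<union> P2'"
    have "{s0..<j1} \<subseteq> UU F" using UU_intro[OF sj] by auto
    then have P1U: "P1 \<subseteq> UU F" unfolding P1_def using P'(1) UU_mono[OF F'F] by blast
    have "(al,last0) \<in> F" using alG G0F by blast
    then have "{j1..last0} \<subseteq> UU F" using UU_intro[of al last0 F] al by auto
    then have P2U: "P2 \<subseteq> UU F" unfolding P2_def using P'(2) UU_mono[OF F'F] by blast
    have P2p: "\<forall>x\<in>P2. \<exists>(a,b)\<in>F. b \<le> x"
    proof
      fix x assume "x \<in> P2"
      then show "\<exists>(a,b)\<in>F. b \<le> x"
      proof (cases "x \<in> {j1..last0}")
        case True then show ?thesis using sj by fastforce
      next
        case False then have "x \<in> P2'" using \<open>x \<in> P2\<close> unfolding P2_def by blast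
        then show ?thesis using P'(3) F'F by blast
      qed
    qed
    have d1: "{s0..<j1} \<inter> P1' = {}" using UF'ge P'(1) by force
    have cP1: "card P1 = (j1 - s0) + card P1'" unfolding P1_def
      using finP1' d1 by (subst card_Un_disjoint) auto
    have d2: "{j1..last0} \<inter> P2' = {}" using P2'ge by force
    have cP2: "card P2 = (Suc last0 - j1) + card P2'" unfolding P2_def
      using finP2' d2 by (subst card_Un_disjoint) auto
    have cF: "card F = card G0 + card F'" unfolding FU using finG0 finF' Fdisj by (rule card_Un_disjoint)
    have ar: "Suc last0 - s0 = (j1 - s0) + (Suc last0 - j1)" using sj1 jl by simp
    have "2 * real (card F) = 2 * real (card G0) + 2 * real (card F')" using cF by simp
    also have "\<dots> < \<epsilon> * real (Suc last0 - s0) + \<epsilon> * real (card P1' + card P2')" using cross P'(4) by linarith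
    also have "\<dots> = \<epsilon> * real (card P1 + card P2)" using cP1 cP2 ar by (simp add: algebra_simps)
    finally have "2 * real (card F) < \<epsilon> * real (card P1 + card P2)" .
    then show ?thesis using P1U P2U P2p by (intro exI[of _ P1] exI[of _ P2]) auto
  qed
qed

lemma part_a:
  assumes sync: "sync_string \<epsilon> T" and eps: "0 < \<epsilon>" and nT: "0 < length T"
    and M: "monotone_matching T T M"
  shows "real (card (bad_pairs M)) < \<epsilon> * real (length T)"
proof -
  define n where "n = length T"
  have Mp: "\<And>a b. (a,b) \<in> M \<Longrightarrow> a < n \<and> b < n \<and> T!a = T!b"
    using M unfolding monotone_matching_def n_def by fast
  have m1: "\<And>a b a' b'. (a,b)\<in>M \<Longrightarrow> (a',b')\<in>M \<Longrightarrow> a<a' \<Longrightarrow> b<b'"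
    using M unfolding monotone_matching_def by fast
  have m2: "\<And>a b a' b'. (a,b)\<in>M \<Longrightarrow> (a',b')\<in>M \<Longrightarrow> a=a' \<Longrightarrow> b=b'"
    using M unfolding monotone_matching_def by fast
  have Msub: "M \<subseteq> {..<n} \<times> {..<n}" using Mp by auto
  have finM: "finite M" using Msub finite_subset by (metis finite_SigmaI finite_lessThan)
  define Bp where "Bp = {(a,b). (a,b) \<in> M \<and> a < b}"
  define Bm where "Bm = {(a,b). (a,b) \<in> M \<and> b < a}"
  define Bt where "Bt = prod.swap ` Bm"
  have finBp: "finite Bp" using finM unfolding Bp_def by (rule rev_finite_subset) auto
  have finBm: "finite Bm" using finM unfolding Bm_def by (rule rev_finite_subset) auto
  have finBt: "finite Bt" unfolding Bt_def using finBm by simp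
  have Bt_iff: "\<And>x y. (x,y) \<in> Bt \<longleftrightarrow> (y,x) \<in> M \<and> x < y"
    unfolding Bt_def Bm_def by force
  have cBt: "card Bt = card Bm" unfolding Bt_def by (rule card_image) (simp add: swap_inj_on)
  have bad: "bad_pairs M = Bp \<union> Bm" unfolding bad_pairs_def Bp_def Bm_def by auto
  have dj: "Bp \<inter> Bm = {}" unfolding Bp_def Bm_def by auto
  have cbad: "card (bad_pairs M) = card Bp + card Bm" unfolding bad using finBp finBm dj by (rule card_Un_disjoint)
  have prp: "\<forall>(a,b)\<in>Bp. a < b \<and> b < length T \<and> T!a = T!b" unfolding Bp_def n_def[symmetric] using Mp by blast
  have monop: "\<forall>(a,b)\<in>Bp. \<forall>(a',b')\<in>Bp. (a < a' \<longrightarrow> b < b') \<and> (a = a' \<longrightarrow> b = b')"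
    unfolding Bp_def using m1 m2 by blast
  have prt: "\<forall>(a,b)\<in>Bt. a < b \<and> b < length T \<and> T!a = T!b"
  proof (clarify)
    fix x y assume "(x,y) \<in> Bt"
    then have "(y,x) \<in> M" "x < y" using Bt_iff by auto
    then show "x < y \<and> y < length T \<and> T!x = T!y" using Mp n_def by force
  qed
  have monot: "\<forall>(a,b)\<in>Bt. \<forall>(a',b')\<in>Bt. (a < a' \<longrightarrow> b < b') \<and> (a = a' \<longrightarrow> b = b')"
  proof (clarify)
    fix x y x' y' assume "(x,y) \<in> Bt" "(x',y') \<in> Bt"
    then have h: "(y,x) \<in> M" "(y',x') \<in> M" using Bt_iff by auto
    have "x < x' \<longrightarrow> y < y'"
    proof
      assume "x < x'"
      have "\<not> y' < y" using m1[OF h(2) h(1)] \<open>x < x'\<close> by auto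
      moreover have "y \<noteq> y'" using m2[OF h(1) h(2)] \<open>x < x'\<close> by auto
      ultimately show "y < y'" by simp
    qed
    moreover have "x = x' \<longrightarrow> y = y'"
    proof
      assume "x = x'"
      have "\<not> y' < y" using m1[OF h(2) h(1)] \<open>x = x'\<close> by auto
      moreover have "\<not> y < y'" using m1[OF h(1) h(2)] \<open>x = x'\<close> by auto
      ultimately show "y = y'" by simp
    qed
    ultimately show "(x < x' \<longrightarrow> y < y') \<and> (x = x' \<longrightarrow> y = y')" by blast
  qed
  obtain P1 P2 where P: "P1 \<subseteq> UU Bp" "P2 \<subseteq> UU Bp" "\<forall>x\<in>P2. \<exists>(a,b)\<in>Bp. b \<le> x"
       "2 * real (card Bp) \<le> \<epsilon> * real (card P1 + card P2)"
       "Bp \<noteq> {} \<longrightarrow> 2 * real (card Bp) < \<epsilon> * real (card P1 + card P2)"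
    using forward[OF sync eps finBp prp monop] by (elim exE conjE)
  obtain Q1 Q2 where Q: "Q1 \<subseteq> UU Bt" "Q2 \<subseteq> UU Bt" "\<forall>x\<in>Q2. \<exists>(a,b)\<in>Bt. b \<le> x"
       "2 * real (card Bt) \<le> \<epsilon> * real (card Q1 + card Q2)"
       "Bt \<noteq> {} \<longrightarrow> 2 * real (card Bt) < \<epsilon> * real (card Q1 + card Q2)"
    using forward[OF sync eps finBt prt monot] by (elim exE conjE)
  have "\<forall>(a,b)\<in>Bp. b < n" using prp n_def by blast
  then have Up: "UU Bp \<subseteq> {..<n}" by (rule UU_bound)
  have "\<forall>(a,b)\<in>Bt. b < n" using prt n_def by blast
  then have Ut: "UU Bt \<subseteq> {..<n}" by (rule UU_bound)
  have finUp: "finite (UU Bp)" using Up by (rule finite_subset) simp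
  have finUt: "finite (UU Bt)" using Ut by (rule finite_subset) simp
  have UUdj: "UU Bp \<inter> UU Bt = {}"
  proof (rule ccontr)
    assume "UU Bp \<inter> UU Bt \<noteq> {}"
    then obtain x where "x \<in> UU Bp" "x \<in> UU Bt" by blast
    then obtain a b a' b' where ab: "(a,b) \<in> Bp" "a \<le> x" "x \<le> b" and ab': "(a',b') \<in> Bt" "a' \<le> x" "x \<le> b'"
      using UU_elim by metis
    have h1: "(a,b) \<in> M" "a < b" using ab(1) unfolding Bp_def by auto
    have h2: "(b',a') \<in> M" "a' < b'" using ab'(1) Bt_iff by auto
    show False
    proof (cases "a < b'")
      case True
      then have "b < a'" using m1[OF h1(1) h2(1)] by simp
      then show False using ab ab' by simp
    next
      case False
      show False
      proof (cases "a = b'")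
        case True then have "b = a'" using m2[OF h1(1) h2(1)] by simp
        then show False using h1 h2 True by simp
      next
        case False
        then have "b' < a" using \<open>\<not> a < b'\<close> by simp
        then show False using ab ab' by simp
      qed
    qed
  qed
  have "card (UU Bp \<union> UU Bt) \<le> n" using Up Ut by (metis card_lessThan card_mono finite_lessThan le_sup_iff)
  then have cU: "card (UU Bp) + card (UU Bt) \<le> n" using card_Un_disjoint[OF finUp finUt UUdj] by simp
  have c1: "card P1 \<le> card (UU Bp)" "card P2 \<le> card (UU Bp)" using P(1,2) finUp card_mono by auto
  have c2: "card Q1 \<le> card (UU Bt)" "card Q2 \<le> card (UU Bt)" using Q(1,2) finUt card_mono by auto
  have sumle: "real (card P1 + card P2) + real (card Q1 + card Q2) \<le> 2 * real n"
    using c1 c2 cU by linarith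
  show ?thesis
  proof (cases "Bp = {} \<and> Bm = {}")
    case True
    then have "card (bad_pairs M) = 0" using cbad by simp
    then show ?thesis using eps nT by simp
  next
    case False
    then have "2 * real (card Bp) + 2 * real (card Bt) < \<epsilon> * real (card P1 + card P2) + \<epsilon> * real (card Q1 + card Q2)"
      using P(4,5) Q(4,5) Bt_def by auto
    also have "\<dots> = \<epsilon> * (real (card P1 + card P2) + real (card Q1 + card Q2))" by (simp add: algebra_simps)
    also have "\<dots> \<le> \<epsilon> * (2 * real n)" using sumle eps by (intro mult_left_mono) auto
    finally show ?thesis using cbad cBt n_def by simp
  qed
qed

lemma part_b:
  assumes ijk: "i < j" "j < k" "k \<le> length S"
    and smp: "self_matching_property (\<epsilon> / 2) (substr S i k)"
  shows "real (ED (substr S i j) (substr S j k)) > (1 - \<epsilon>) * real (k - i)"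
proof -
  define x where "x = substr S i j"
  define y where "y = substr S j k"
  define T where "T = substr S i k"
  have T: "T = x @ y" unfolding T_def x_def y_def using ijk by (simp add: substr_append)
  have lx: "length x = j - i" unfolding x_def using ijk by (simp add: substr_len)
  have ly: "length y = k - j" unfolding y_def using ijk by (simp add: substr_len)
  obtain z where z: "subseq z x" "subseq z y" "length x + length y \<le> 2 * length z + ED x y"
    using ED_lower by blast
  obtain f where f: "\<forall>i j. i < j \<longrightarrow> j < length z \<longrightarrow> f i < f j"
     "\<forall>i < length z. f i < length x \<and> x ! (f i) = z ! i" using subseq_idx[OF z(1)] by blast
  obtain g where g: "\<forall>i j. i < j \<longrightarrow> j < length z \<longrightarrow> g i < g j"
     "\<forall>i < length z. g i < length y \<and> y ! (g i) = z ! i" using subseq_idx[OF z(2)] by blast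
  define M where "M = (\<lambda>t. (f t, length x + g t)) ` {..<length z}"
  have finj: "\<And>t t'. t < length z \<Longrightarrow> t' < length z \<Longrightarrow> f t < f t' \<Longrightarrow> t < t'"
    by (metis f(1) linorder_neqE_nat order.asym)
  have finj2: "\<And>t t'. t < length z \<Longrightarrow> t' < length z \<Longrightarrow> f t = f t' \<Longrightarrow> t = t'"
    by (metis f(1) linorder_neqE_nat order.irrefl)
  have mm: "monotone_matching T T M"
    unfolding monotone_matching_def
  proof (intro conjI)
    show "\<forall>(a, b)\<in>M. a < length T \<and> b < length T \<and> T ! a = T ! b"
    proof (clarify)
      fix a b assume "(a,b) \<in> M"
      then obtain t where t: "t < length z" "a = f t" "b = length x + g t" unfolding M_def by auto
      have "T ! a = z ! t" using t f(2) T by (simp add: nth_append)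
      moreover have "T ! b = z ! t" using t g(2) T by (simp add: nth_append)
      ultimately show "a < length T \<and> b < length T \<and> T ! a = T ! b" using t f(2) g(2) T by fastforce
    qed
    show "\<forall>(a, b)\<in>M. \<forall>(a', b')\<in>M. (a < a' \<longrightarrow> b < b') \<and> (a = a' \<longrightarrow> b = b')"
    proof (clarify)
      fix a b a' b' assume "(a,b) \<in> M" "(a',b') \<in> M"
      then obtain t t' where t: "t < length z" "a = f t" "b = length x + g t"
        and t': "t' < length z" "a' = f t'" "b' = length x + g t'" unfolding M_def by auto
      show "(a < a' \<longrightarrow> b < b') \<and> (a = a' \<longrightarrow> b = b')"
        using finj[OF t(1) t'(1)] finj2[OF t(1) t'(1)] g(1) t t' by auto
    qed
  qed
  have "bad_pairs M = M" unfolding bad_pairs_def M_def using f(2) by force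
  moreover have "card M = length z" unfolding M_def
    by (subst card_image) (auto simp: inj_on_def intro: finj2)
  ultimately have "real (length z) < \<epsilon> / 2 * real (length T)"
    using smp mm unfolding self_matching_property_def T_def by metis
  moreover have "length T = k - i" using T lx ly ijk by simp
  moreover have "real (length x) + real (length y) \<le> 2 * real (length z) + real (ED x y)"
    using z(3) by (metis of_nat_add of_nat_le_iff of_nat_mult of_nat_numeral)
  moreover have "real (length x) + real (length y) = real (k - i)" using lx ly ijk by simp
  ultimately show ?thesis unfolding x_def[symmetric] y_def[symmetric] by (simp add: algebra_simps)
qed

lemma sync_sub:
  assumes "sync_string \<epsilon> S" "i \<le> j" "j \<le> length S"
  shows "sync_string \<epsilon> (substr S i j)"
  unfolding sync_string_def
proof (intro allI impI)
  fix p q r assume pqr: "p < q \<and> q < r \<and> r \<le> length (substr S i j)"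
  have lT: "length (substr S i j) = j - i" using assms by (simp add: substr_len)
  have e1: "substr (substr S i j) p q = substr S (i+p) (i+q)" using pqr lT by (intro substr_substr) auto
  have e2: "substr (substr S i j) q r = substr S (i+q) (i+r)" using pqr lT by (intro substr_substr) auto
  have "real (ED (substr S (i+p) (i+q)) (substr S (i+q) (i+r))) > (1 - \<epsilon>) * real ((i+r) - (i+p))"
    using assms(1) pqr lT assms unfolding sync_string_def by (metis add_less_cancel_left add_le_mono le_add_diff_inverse order_trans nat_add_left_cancel_le)
  then show "real (ED (substr (substr S i j) p q) (substr (substr S i j) q r)) > (1 - \<epsilon>) * real (r - p)"
    using e1 e2 by simp
qed

theorem theorem29:
  fixes \<epsilon> :: real and S :: "'a list"
  assumes "0 < \<epsilon>" and "\<epsilon> < 1"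
  shows "(sync_string \<epsilon> S \<longrightarrow>
           (\<forall>i j. i < j \<and> j \<le> length S \<longrightarrow> self_matching_property \<epsilon> (substr S i j)))
       \<and> ((\<forall>i j. i < j \<and> j \<le> length S \<longrightarrow> self_matching_property (\<epsilon> / 2) (substr S i j))
           \<longrightarrow> sync_string \<epsilon> S)"
proof (intro conjI impI allI)
  fix i j assume s: "sync_string \<epsilon> S" and ij: "i < j \<and> j \<le> length S"
  have st: "sync_string \<epsilon> (substr S i j)" using sync_sub[OF s] ij by simp
  have l: "0 < length (substr S i j)" using ij by (simp add: substr_len)
  show "self_matching_property \<epsilon> (substr S i j)"
    unfolding self_matching_property_def using part_a[OF st assms(1) l] by blast
next
  assume h: "\<forall>i j. i < j \<and> j \<le> length S \<longrightarrow> self_matching_property (\<epsilon> / 2) (substr S i j)"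
  show "sync_string \<epsilon> S" unfolding sync_string_def
  proof (intro allI impI)
    fix i j k assume ijk: "i < j \<and> j < k \<and> k \<le> length S"
    then have "self_matching_property (\<epsilon> / 2) (substr S i k)" using h by simp
    then show "real (ED (substr S i j) (substr S j k)) > (1 - \<epsilon>) * real (k - i)"
      using part_b ijk by blast
  qed
qed

end
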